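(* Let $N\ge1$, $\Delta w>0$, $\Delta t>0$. For $i=0,\dots,N-1$ let $D_{i+1/2}>0$ and $\tilde{\mathcal C}^n_{i+1/2}\in\mathbb R$ be given (in applications computed from $f^n$), and set $\lambda^n_{i+1/2}=\Delta w\,\tilde{\mathcal C}^n_{i+1/2}/D_{i+1/2}$, $\delta^n_{i+1/2}=\frac{1}{\lambda^n_{i+1/2}}+\frac{1}{1-e^{\lambda^n_{i+1/2}}}$ (with $\delta^n_{i+1/2}=1/2$ if $\lambda^n_{i+1/2}=0$). Consider the semi-implicit scheme $$f_i^{n+1}=f_i^n+\Delta t\,\frac{\hat{\mathcal F}^{n+1}_{i+1/2}-\hat{\mathcal F}^{n+1}_{i-1/2}}{\Delta w},\quad i=0,\dots,N,$$ with $\hat{\mathcal F}^{n+1}_{-1/2}=\hat{\mathcal F}^{n+1}_{N+1/2}=0$ and, for $i=0,\dots,N-1$, $$\hat{\mathcal F}^{n+1}_{i+1/2}=\tilde{\mathcal C}^n_{i+1/2}\big[(1-\delta^n_{i+1/2})f^{n+1}_{i+1}+\delta^n_{i+1/2}f^{n+1}_i\big]+D_{i+1/2}\frac{f^{n+1}_{i+1}-f^{n+1}_i}{\Delta w}.$$ Let $M=\max_i|\tilde{\mathcal C}^n_{i+1/2}|$. If $\Delta t<\frac{\Delta w}{2M}$, then this linear system for $(f_0^{n+1},\dots,f_N^{n+1})$ has a unique solution, and $f_i^n\ge0$ for all $i$ implies $f_i^{n+1}\ge0$ for all $i=0,\dots,N$.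
   Context: Chang–Cooper type (SP-CC) discretization of the 1D Fokker–Planck equation $\partial_t f=\partial_w[(\mathcal B[f]+D')f+D\partial_w f]$ on a uniform grid with no-flux boundary conditions; the drift coefficients and weights are frozen at time level $n$ while $f$ is taken at level $n+1$. *)

theory Defs
  imports Complex_Main
begin

definition cc_delta :: "real \<Rightarrow> real" where
  "cc_delta lam = (if lam = 0 then 1/2 else 1/lam + 1/(1 - exp lam))"

definition cc_lambda :: "real \<Rightarrow> (nat \<Rightarrow> real) \<Rightarrow> (nat \<Rightarrow> real) \<Rightarrow> nat \<Rightarrow> real" where
  "cc_lambda dw C D i = dw * C i / D i"

text \<open>Flux hat-F at interface i+1/2 (index i = 0..N-1) evaluated at grid function g;
  it is zero at i = N (no-flux boundary N+1/2).\<close>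
definition cc_flux :: "nat \<Rightarrow> real \<Rightarrow> (nat \<Rightarrow> real) \<Rightarrow> (nat \<Rightarrow> real) \<Rightarrow> (nat \<Rightarrow> real) \<Rightarrow> nat \<Rightarrow> real" where
  "cc_flux N dw C D g i =
     (if i < N then
        (let del = cc_delta (cc_lambda dw C D i) in
         C i * ((1 - del) * g (i+1) + del * g i) + D i * (g (i+1) - g i) / dw)
      else 0)"

definition cc_scheme :: "nat \<Rightarrow> real \<Rightarrow> real \<Rightarrow> (nat \<Rightarrow> real) \<Rightarrow> (nat \<Rightarrow> real) \<Rightarrow> (nat \<Rightarrow> real) \<Rightarrow> (nat \<Rightarrow> real) \<Rightarrow> bool" where
  "cc_scheme N dw dt C D f g \<longleftrightarrow>
     (\<forall>i\<le>N. g i = f i + dt * (cc_flux N dw C D g i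
                   - (if i = 0 then 0 else cc_flux N dw C D g (i - 1))) / dw)"

end

theory Submission
  imports Defs
begin

definition rs :: "nat \<Rightarrow> real \<Rightarrow> (nat\<Rightarrow>real) \<Rightarrow> (nat\<Rightarrow>real) \<Rightarrow> (nat\<Rightarrow>real) \<Rightarrow> nat \<Rightarrow> real" where
"rs N r a b g i = g i - r*((if i<N then a i*g(Suc i) - b i*g i else 0)
   - (if i=0 then 0 else (if i-1<N then a(i-1)*g i - b(i-1)*g(i-1) else 0)))"

fun sh :: "real \<Rightarrow> (nat\<Rightarrow>real) \<Rightarrow> (nat\<Rightarrow>real) \<Rightarrow> (nat\<Rightarrow>real) \<Rightarrow> real \<Rightarrow> nat \<Rightarrow> real" where
  "sh r a b f s 0 = s"
| "sh r a b f s (Suc 0) = (s + r*b 0*s - f 0)/(r*a 0)"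
| "sh r a b f s (Suc (Suc k)) =
     (sh r a b f s (Suc k)*(1 + r*b(Suc k) + r*a k) - r*b k*sh r a b f s k - f(Suc k))/(r*a(Suc k))"

lemma sh_row:
  assumes "k < N" "r > 0" "a k > 0"
  shows "rs N r a b (sh r a b f s) k = f k"
proof (cases k)
  case 0
  then show ?thesis using assms unfolding rs_def by (simp add: field_simps)
next
  case (Suc j)
  then show ?thesis using assms unfolding rs_def by (simp add: field_simps)
qed

lemma sh_lin: "sh r a b f s k = s * sh r a b (\<lambda>_. 0) 1 k + sh r a b f 0 k"
  by (induction r a b f s k rule: sh.induct)
     (simp_all add: diff_divide_distrib add_divide_distrib algebra_simps)

lemma rs_lin: "rs N r a b (\<lambda>k. s*p k + q k) i = s*rs N r a b p i + rs N r a b q i"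
  unfolding rs_def by (simp add: algebra_simps)

lemma rs_diff: "rs N r a b (\<lambda>k. p k - q k) i = rs N r a b p i - rs N r a b q i"
  unfolding rs_def by (simp add: algebra_simps)

lemma rs_zero: "rs N r a b (\<lambda>_. 0) i = 0" unfolding rs_def by simp

lemma minprin:
  assumes r: "r > 0" and ab: "\<And>i. i < N \<Longrightarrow> a i \<ge> 0 \<and> b i \<ge> 0"
    and fac: "\<And>i. i \<le> N \<Longrightarrow> 1 - r*((if i<N then a i - b i else 0) - (if 0<i then a(i-1) - b(i-1) else 0)) > 0"
    and sol: "\<And>i. i \<le> N \<Longrightarrow> rs N r a b g i \<ge> 0"
  shows "\<And>i. i \<le> N \<Longrightarrow> g i \<ge> 0"
proof -
  obtain m where m: "m \<le> N" "\<And>i. i \<le> N \<Longrightarrow> g m \<le> g i"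
  proof -
    let ?M = "Min (g ` {..N})"
    have "?M \<in> g ` {..N}" by (intro Min_in) auto
    then obtain m where "m \<le> N" "g m = ?M" by (metis atMost_iff imageE)
    moreover have "\<And>i. i \<le> N \<Longrightarrow> ?M \<le> g i" by (intro Min_le) auto
    ultimately show ?thesis using that by auto
  qed
  have "g m \<ge> 0"
  proof (rule ccontr)
    assume neg: "\<not> g m \<ge> 0"
    define A where "A = (if m<N then a m*g(Suc m) - b m*g m else 0)"
    define B where "B = (if m=0 then 0 else (if m-1<N then a(m-1)*g m - b(m-1)*g(m-1) else 0))"
    have A: "A \<ge> (if m<N then a m - b m else 0) * g m"
    proof (cases "m < N")
      case True
      then have "a m * g m \<le> a m * g (Suc m)" using ab m by (intro mult_left_mono) auto
      then show ?thesis using True unfolding A_def by (simp add: algebra_simps)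
    qed (simp add: A_def)
    have B: "B \<le> (if 0<m then a(m-1) - b(m-1) else 0) * g m"
    proof (cases "m = 0")
      case False
      then have "b (m-1) * g m \<le> b (m-1) * g (m-1)" using ab m by (intro mult_left_mono) auto
      moreover have "m - 1 < N" using False m by simp
    ultimately show ?thesis using False unfolding B_def by (simp add: algebra_simps)
    qed (simp add: B_def)
    have "rs N r a b g m = g m - r*(A - B)" unfolding rs_def A_def B_def by simp
    also have "\<dots> \<le> g m - r*((if m<N then a m - b m else 0) * g m - (if 0<m then a(m-1) - b(m-1) else 0) * g m)"
      using A B r by (intro diff_left_mono mult_left_mono) auto
    also have "\<dots> = g m * (1 - r*((if m<N then a m - b m else 0) - (if 0<m then a(m-1) - b(m-1) else 0)))"
      by (simp add: algebra_simps)
    also have "\<dots> < 0" using neg fac[OF m(1)] by (intro mult_neg_pos) auto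
    finally show False using sol[OF m(1)] by simp
  qed
  then show "\<And>i. i \<le> N \<Longrightarrow> g i \<ge> 0" using m by (meson order_trans)
qed

lemma lam_pos: "(l::real) \<noteq> 0 \<Longrightarrow> l / (exp l - 1) > 0"
proof (cases "l > 0")
  case True then show ?thesis by (simp add: divide_pos_pos)
next
  case False
  assume "l \<noteq> 0"
  then have "l < 0" using False by simp
  then have "exp l < 1" by simp
  then show ?thesis using \<open>l < 0\<close> by (simp add: divide_neg_neg)
qed

lemma ab_pos:
  fixes Cv Dv dw :: real
  assumes "Dv > 0" "dw > 0"
  defines "l \<equiv> dw * Cv / Dv"
  shows "Cv*(1 - cc_delta l) + Dv/dw > 0" "Dv/dw - Cv * cc_delta l > 0"
proof -
  have C: "Cv = l * Dv / dw" using assms by (simp add: l_def field_simps)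
  have p: "Dv/dw > 0" using assms by simp
  have "1 + l*(1 - cc_delta l) > 0 \<and> 1 - l * cc_delta l > 0"
  proof (cases "l = 0")
    case True then show ?thesis by (simp add: cc_delta_def)
  next
    case False
    have e: "exp l - 1 \<noteq> 0" using False by simp
    have e2: "1 - exp l \<noteq> 0" using False by simp
    have "1 - l * cc_delta l = l / (exp l - 1)"
      using False e e2 unfolding cc_delta_def by (simp add: field_simps)
    moreover have "1 + l*(1 - cc_delta l) = exp l * (l / (exp l - 1))"
      using False e e2 unfolding cc_delta_def by (simp add: field_simps)
    moreover have "exp l * (l / (exp l - 1)) > 0" by (rule mult_pos_pos[OF exp_gt_zero lam_pos[OF False]])
    ultimately show ?thesis using lam_pos[OF False] by linarith
  qed
  moreover have "Cv*(1 - cc_delta l) + Dv/dw = Dv/dw * (1 + l*(1 - cc_delta l))"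
    unfolding C using assms by (simp add: field_simps)
  moreover have "Dv/dw - Cv * cc_delta l = Dv/dw * (1 - l * cc_delta l)"
    unfolding C using assms by (simp add: field_simps)
  ultimately show "Cv*(1 - cc_delta l) + Dv/dw > 0" "Dv/dw - Cv * cc_delta l > 0"
    using assms(1,2) by (auto intro!: divide_pos_pos mult_pos_pos)
qed


theorem mainTheorem4:
  fixes N :: nat and dw dt :: real and C D f :: "nat \<Rightarrow> real"
  assumes "N \<ge> 1" and "dw > 0" and "dt > 0"
    and "\<And>i. i < N \<Longrightarrow> D i > 0"
    and "2 * dt * Max {\<bar>C i\<bar> | i. i < N} < dw"
  shows "(\<exists>g. cc_scheme N dw dt C D f g \<and>
            (\<forall>h. cc_scheme N dw dt C D f h \<longrightarrow> (\<forall>i\<le>N. h i = g i)))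
       \<and> ((\<forall>i\<le>N. f i \<ge> 0) \<longrightarrow>
            (\<forall>g. cc_scheme N dw dt C D f g \<longrightarrow> (\<forall>i\<le>N. g i \<ge> 0)))"
proof -
  define r where "r = dt / dw"
  define dl where "dl i = cc_delta (cc_lambda dw C D i)" for i
  define a where "a i = C i*(1 - dl i) + D i/dw" for i
  define b where "b i = D i/dw - C i * dl i" for i
  have r: "r > 0" using assms unfolding r_def by simp
  have ab: "\<And>i. i < N \<Longrightarrow> a i > 0 \<and> b i > 0"
    using ab_pos[OF assms(4) assms(2)] unfolding a_def b_def dl_def cc_lambda_def by blast
  have flux: "cc_flux N dw C D g i = (if i<N then a i*g(Suc i) - b i*g i else 0)" for g i
    unfolding cc_flux_def a_def b_def dl_def Let_def using assms(2)
    by (simp add: field_simps)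
  have sch: "cc_scheme N dw dt C D F g \<longleftrightarrow> (\<forall>i\<le>N. rs N r a b g i = F i)" for F g
    unfolding cc_scheme_def rs_def flux r_def using assms(2) by (auto simp: field_simps)
  let ?S = "{\<bar>C i\<bar> | i. i < N}"
  have Seq: "?S = (\<lambda>i. \<bar>C i\<bar>) ` {..<N}" by auto
  have Mb: "\<bar>C i\<bar> \<le> Max ?S" if "i < N" for i
    unfolding Seq using that by (intro Max_ge) auto
  have rM: "r * Max ?S < 1/2" using assms(2,5) unfolding r_def by (simp add: field_simps)
  have amb: "a i - b i = C i" for i unfolding a_def b_def by (simp add: algebra_simps)
  have fac: "1 - r*((if i<N then a i - b i else 0) - (if 0<i then a(i-1) - b(i-1) else 0)) > 0"
    if "i \<le> N" for i
  proof -
    have x: "r * \<bar>if i<N then C i else 0\<bar> \<le> r * Max ?S"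
      using Mb[of i] Mb[of 0] r assms(1) by (intro mult_left_mono) auto
    have y: "r * \<bar>if 0<i then C (i-1) else 0\<bar> \<le> r * Max ?S"
      using Mb[of "i-1"] Mb[of 0] r assms(1) that by (intro mult_left_mono) auto
    define X where "X = (if i<N then C i else 0)"
    define Y where "Y = (if 0<i then C (i-1) else 0)"
    have e: "(if i<N then a i - b i else 0) - (if 0<i then a(i-1) - b(i-1) else 0) = X - Y"
      unfolding X_def Y_def amb by simp
    have "X - Y \<le> \<bar>X\<bar> + \<bar>Y\<bar>" by linarith
    then have "r*(X - Y) \<le> r * (\<bar>X\<bar> + \<bar>Y\<bar>)" using r by (intro mult_left_mono) auto
    then have "r*(X - Y) \<le> r * \<bar>X\<bar> + r * \<bar>Y\<bar>" by (simp add: distrib_left)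
    then show ?thesis unfolding e using x y rM unfolding X_def[symmetric] Y_def[symmetric] by linarith
  qed
  have ab0: "\<And>i. i < N \<Longrightarrow> a i \<ge> 0 \<and> b i \<ge> 0" using ab by fastforce
  have nonneg: "\<forall>i\<le>N. g i \<ge> 0" if "\<forall>i\<le>N. rs N r a b g i \<ge> 0" for g
  proof (intro allI impI)
    fix i assume "i \<le> N"
    have h: "\<And>i. i \<le> N \<Longrightarrow> rs N r a b g i \<ge> 0" using that by simp
    show "g i \<ge> 0" by (rule minprin[OF r ab0 fac h \<open>i \<le> N\<close>])
  qed
  have zero: "\<forall>i\<le>N. g i = 0" if "\<forall>i\<le>N. rs N r a b g i = 0" for g
  proof -
    have "\<forall>i\<le>N. g i \<ge> 0" using nonneg that by simp
    moreover have "\<forall>i\<le>N. (\<lambda>k. 0 - g k) i \<ge> 0"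
    proof -
      have "rs N r a b (\<lambda>k. 0 - g k) i = 0" if "i \<le> N" for i
        using rs_diff[of N r a b "\<lambda>_. 0" g i] rs_zero[of N r a b i] \<open>\<forall>i\<le>N. rs N r a b g i = 0\<close> that
        by simp
      then show ?thesis using nonneg[of "\<lambda>k. 0 - g k"] by simp
    qed
    ultimately show ?thesis by force
  qed
  define p where "p = sh r a b (\<lambda>_. 0) 1"
  define q where "q = sh r a b f 0"
  have prow: "rs N r a b p k = 0" if "k < N" for k
    unfolding p_def using sh_row[OF that r] ab that by auto
  have qrow: "rs N r a b q k = f k" if "k < N" for k
    unfolding q_def using sh_row[OF that r] ab that by auto
  have c: "rs N r a b p N \<noteq> 0"
  proof
    assume "rs N r a b p N = 0"
    then have "\<forall>i\<le>N. rs N r a b p i = 0" using prow by (metis le_neq_implies_less)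
    then have "p 0 = 0" using zero by blast
    then show False unfolding p_def by simp
  qed
  define s where "s = (f N - rs N r a b q N) / rs N r a b p N"
  define g where "g = (\<lambda>k. s * p k + q k)"
  have gsol: "\<forall>i\<le>N. rs N r a b g i = f i"
  proof (intro allI impI)
    fix i assume "i \<le> N"
    show "rs N r a b g i = f i"
    proof (cases "i < N")
      case True then show ?thesis unfolding g_def rs_lin using prow qrow by simp
    next
      case False
      then have "i = N" using \<open>i \<le> N\<close> by simp
      then show ?thesis unfolding g_def rs_lin s_def using c by simp
    qed
  qed
  have uniq: "\<forall>i\<le>N. h i = g i" if "\<forall>i\<le>N. rs N r a b h i = f i" for h
  proof -
    have "\<forall>i\<le>N. rs N r a b (\<lambda>k. h k - g k) i = 0"
      using that gsol rs_diff by simp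
    then show ?thesis using zero[of "\<lambda>k. h k - g k"] by simp
  qed
  show ?thesis
  proof (intro conjI impI allI)
    show "\<exists>g. cc_scheme N dw dt C D f g \<and> (\<forall>h. cc_scheme N dw dt C D f h \<longrightarrow> (\<forall>i\<le>N. h i = g i))"
      using gsol uniq unfolding sch by blast
  next
    fix g' i assume "\<forall>i\<le>N. 0 \<le> f i" "cc_scheme N dw dt C D f g'" "i \<le> N"
    then show "0 \<le> g' i" using nonneg[of g'] unfolding sch by simp
  qed
qed

end
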